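(* Let $n\ge 1$ and $N\ge 1$ be integers, and let $$F_n(s)=\frac{(s-1)^n}{s^{n+1}}\,\zeta(s)^n,\qquad \Re(s)>1,$$ where $\zeta(s)=\sum_{m=1}^\infty m^{-s}$ is the Riemann zeta-function. Let $f_n=\mathcal{L}^{-1}\{F_n\}$ be the inverse Laplace transform of $F_n$. Then for $0<t<\ln(N+1)$, $$f_n(t)=\sum_{m=1}^{N} d_n(m)\,h(t-\ln m)\,L_n(t-\ln m).$$
   Context: $h$ is the unit step function: $h(t)=0$ for $t<0$, $h(0)=\tfrac12$, $h(t)=1$ for $t>0$. $L_n$ is the $n$-th Laguerre polynomial $L_n(t)=\sum_{\nu=0}^{n}\binom{n}{\nu}\frac{(-t)^{\nu}}{\nu!}$. $d_n(m)$ is the Piltz divisor function, $d_n(m)=\#\{(k_1,\dots,k_n)\in\mathbb{Z}_{\ge1}^n : k_1k_2\cdots k_n=m\}$, so that $\zeta(s)^n=\sum_{m=1}^\infty d_n(m)m^{-s}$ for $\Re(s)>1$. *)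

theory Defs
  imports "HOL-Analysis.Analysis"
begin

definition step_h :: "real \<Rightarrow> real" where
  "step_h t = (if t < 0 then 0 else if t = 0 then 1/2 else 1)"

definition laguerre :: "nat \<Rightarrow> real \<Rightarrow> real" where
  "laguerre n t = (\<Sum>\<nu>=0..n. real (n choose \<nu>) * (- t) ^ \<nu> / fact \<nu>)"

definition piltz :: "nat \<Rightarrow> nat \<Rightarrow> nat" where
  "piltz n m = card {ks :: nat list. length ks = n \<and> (\<forall>k\<in>set ks. k \<ge> 1) \<and> prod_list ks = m}"

text \<open>Riemann zeta function via its Dirichlet series (meaningful for Re s > 1).\<close>
definition zeta_series :: "complex \<Rightarrow> complex" where
  "zeta_series s = (\<Sum>m. 1 / (of_nat (Suc m)) powr s)"

definition F_fun :: "nat \<Rightarrow> complex \<Rightarrow> complex" where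
  "F_fun n s = (s - 1) ^ n / s ^ (n + 1) * zeta_series s ^ n"

text \<open>Truncated Bromwich integral (1/(2 pi i)) \<integral>_{c-iT}^{c+iT} F(s) e^{st} ds,
  parametrised by s = c + i y, so ds = i dy.\<close>
definition bromwich_trunc :: "(complex \<Rightarrow> complex) \<Rightarrow> real \<Rightarrow> real \<Rightarrow> real \<Rightarrow> complex" where
  "bromwich_trunc F c t T =
     integral {-T..T} (\<lambda>y. F (Complex c y) * exp (Complex c y * complex_of_real t)) / complex_of_real (2 * pi)"

end

theory Submission
  imports Defs "HOL-Complex_Analysis.Complex_Analysis"
begin


definition phi :: "nat \<Rightarrow> real \<Rightarrow> complex \<Rightarrow> complex" where
  "phi j u s = exp (s * of_real u) / s ^ Suc j"

lemma norm_phi: "norm (phi j u s) = exp (Re s * u) / norm s ^ Suc j"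
  by (simp add: phi_def norm_divide norm_power norm_mult)

lemma phi_cont: "0 \<notin> S \<Longrightarrow> continuous_on S (phi j u)"
  unfolding phi_def by (intro continuous_intros) auto

lemma phi_holo: "0 \<notin> S \<Longrightarrow> phi j u holomorphic_on S"
  unfolding phi_def by (intro holomorphic_intros) auto

lemma horiz_bound:
  assumes y: "y \<noteq> 0" and u: "u \<noteq> 0"
  shows "norm (contour_integral (linepath (Complex a y) (Complex b y)) (phi j u))
           \<le> \<bar>exp (b*u) - exp (a*u)\<bar> / (\<bar>u\<bar> * \<bar>y\<bar> ^ Suc j)"
proof (cases "a = b")
  case True then show ?thesis by simp
next
  case False
  define Y where "Y = \<bar>y\<bar> ^ Suc j"
  have Y: "Y > 0" using y by (simp add: Y_def)
  have "0 \<notin> closed_segment (Complex a y) (Complex b y)"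
    using y by (auto simp: closed_segment_same_Im)
  then have ci: "phi j u contour_integrable_on linepath (Complex a y) (Complex b y)"
    by (intro contour_integrable_continuous_linepath phi_cont)
  define I where "I = contour_integral (linepath (Complex a y) (Complex b y)) (phi j u)"
  have hI: "((\<lambda>x. phi j u (linepath (Complex a y) (Complex b y) x) * (Complex b y - Complex a y)) has_integral I) {0..1}"
    using has_contour_integral_integral[OF ci] unfolding I_def has_contour_integral_linepath .
  define g where "g x = exp ((a + x*(b-a)) * u) * \<bar>b - a\<bar> / Y" for x
  define K where "K = \<bar>b - a\<bar> / ((b-a)*u*Y)"
  define G where "G x = exp ((a + x*(b-a)) * u) * K" for x
  have lp: "linepath (Complex a y) (Complex b y) x = Complex (a + x*(b-a)) y" for x
    by (simp add: linepath_def complex_eq_iff algebra_simps)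
  have gI: "(g has_integral (G 1 - G 0)) {0..1}"
  proof (rule fundamental_theorem_of_calculus)
    fix x :: real assume "x \<in> {0..1}"
    have d: "((\<lambda>x. exp ((a + x*(b-a)) * u)) has_real_derivative exp ((a + x*(b-a)) * u) * ((b-a)*u)) (at x)"
      by (auto intro!: derivative_eq_intros simp: algebra_simps)
    have "g x = exp ((a + x*(b-a)) * u) * ((b-a)*u) * K"
      unfolding g_def K_def using False u Y by (simp add: field_simps)
    then have "(G has_real_derivative g x) (at x)"
      unfolding G_def using DERIV_cmult_right[OF d, of K] by simp
    then show "(G has_vector_derivative g x) (at x within {0..1})"
      by (simp add: has_real_derivative_iff_has_vector_derivative has_vector_derivative_at_within)
  qed simp
  have "norm (integral {0..1} (\<lambda>x. phi j u (linepath (Complex a y) (Complex b y) x) * (Complex b y - Complex a y))) \<le> integral {0..1} g"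
  proof (rule integral_norm_bound_integral)
    show "(\<lambda>x. phi j u (linepath (Complex a y) (Complex b y) x) * (Complex b y - Complex a y)) integrable_on {0..1}"
      using hI by blast
    show "g integrable_on {0..1}" using gI by blast
    fix x :: real assume "x \<in> {0..1}"
    have n1: "norm (Complex b y - Complex a y) = \<bar>b - a\<bar>"
      by (simp add: cmod_def)
    have "\<bar>y\<bar> \<le> norm (Complex (a + x*(b-a)) y)"
      using abs_Im_le_cmod[of "Complex (a + x*(b-a)) y"] by simp
    then have "Y \<le> norm (Complex (a + x*(b-a)) y) ^ Suc j"
      unfolding Y_def by (intro power_mono) auto
    then have le1: "exp ((a + x*(b-a)) * u) / norm (Complex (a + x*(b-a)) y) ^ Suc j \<le> exp ((a + x*(b-a)) * u) / Y"
      using Y by (intro divide_left_mono) auto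
    show "norm (phi j u (linepath (Complex a y) (Complex b y) x) * (Complex b y - Complex a y)) \<le> g x"
      unfolding lp norm_mult n1 norm_phi g_def
      using mult_right_mono[OF le1 abs_ge_zero[of "b-a"]] by (simp add: field_simps)
  qed
  then have "norm I \<le> integral {0..1} g" using integral_unique[OF hI] by simp
  also have "\<dots> = G 1 - G 0" using gI by (simp add: integral_unique)
  also have "\<dots> = (exp (b*u) - exp (a*u)) / ((b-a)*u) * \<bar>b-a\<bar> / Y"
  proof -
    have "G 1 = exp (b*u) * K" "G 0 = exp (a*u) * K" by (simp_all add: G_def)
    moreover have "b - a \<noteq> 0" using False by simp
    ultimately show ?thesis unfolding K_def using u Y by (simp add: field_simps)
  qed
  also have "\<dots> = \<bar>exp (b*u) - exp (a*u)\<bar> / (\<bar>u\<bar> * Y)"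
  proof -
    have "(exp (b*u) - exp (a*u)) / ((b-a)*u) \<ge> 0"
    proof (cases "(b-a)*u > 0")
      case True
      then have "b*u > a*u" by (simp add: algebra_simps)
      then show ?thesis using True by simp
    next
      case False
      then have "(b-a)*u < 0" using u \<open>a \<noteq> b\<close> by (simp add: not_less order_le_less)
      then have "b*u < a*u" by (simp add: algebra_simps)
      then show ?thesis using \<open>(b-a)*u < 0\<close> by (simp add: divide_nonpos_neg)
    qed
    then have "(exp (b*u) - exp (a*u)) / ((b-a)*u) = \<bar>(exp (b*u) - exp (a*u)) / ((b-a)*u)\<bar>" by linarith
    also have "\<dots> = \<bar>exp (b*u) - exp (a*u)\<bar> / (\<bar>b-a\<bar> * \<bar>u\<bar>)" by (simp only: abs_divide abs_mult)
    finally show ?thesis using False Y by (simp add: field_simps)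
  qed
  finally show ?thesis unfolding I_def Y_def .
qed

lemma rect_split:
  assumes "continuous_on (path_image (rectpath a1 a3)) f"
  shows "contour_integral (rectpath a1 a3) f =
      contour_integral (linepath a1 (Complex (Re a3) (Im a1))) f
    + contour_integral (linepath (Complex (Re a3) (Im a1)) a3) f
    + contour_integral (linepath a3 (Complex (Re a1) (Im a3))) f
    + contour_integral (linepath (Complex (Re a1) (Im a3)) a1) f"
proof -
  define a2 a4 where "a2 = Complex (Re a3) (Im a1)" and "a4 = Complex (Re a1) (Im a3)"
  have pi: "path_image (rectpath a1 a3) = closed_segment a1 a2 \<union> closed_segment a2 a3 \<union>
                  closed_segment a3 a4 \<union> closed_segment a4 a1"
    by (simp add: rectpath_def Let_def path_image_join a2_def a4_def Un_assoc)
  have i1: "f contour_integrable_on linepath a1 a2"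
    by (rule contour_integrable_continuous_linepath, rule continuous_on_subset[OF assms]) (auto simp: pi)
  have i2: "f contour_integrable_on linepath a2 a3"
    by (rule contour_integrable_continuous_linepath, rule continuous_on_subset[OF assms]) (auto simp: pi)
  have i3: "f contour_integrable_on linepath a3 a4"
    by (rule contour_integrable_continuous_linepath, rule continuous_on_subset[OF assms]) (auto simp: pi)
  have i4: "f contour_integrable_on linepath a4 a1"
    by (rule contour_integrable_continuous_linepath, rule continuous_on_subset[OF assms]) (auto simp: pi)
  show ?thesis
    unfolding rectpath_def Let_def a2_def[symmetric] a4_def[symmetric]
    using i1 i2 i3 i4 by (simp add: contour_integrable_joinI valid_path_join add.assoc)
qed

lemma vert_side_bound:
  assumes "\<bar>x\<bar> \<ge> 1"
  shows "norm (contour_integral (linepath (Complex x y1) (Complex x y2)) (phi j u))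
           \<le> exp (x*u) * \<bar>y2 - y1\<bar>"
proof -
  have nz: "0 \<notin> closed_segment (Complex x y1) (Complex x y2)"
    using assms by (auto simp: closed_segment_same_Re)
  have ci: "(phi j u has_contour_integral contour_integral (linepath (Complex x y1) (Complex x y2)) (phi j u)) (linepath (Complex x y1) (Complex x y2))"
    by (intro has_contour_integral_integral contour_integrable_continuous_linepath phi_cont nz)
  have "norm (contour_integral (linepath (Complex x y1) (Complex x y2)) (phi j u))
          \<le> exp (x*u) * norm (Complex x y2 - Complex x y1)"
  proof (rule has_contour_integral_bound_linepath[OF ci])
    fix z assume "z \<in> closed_segment (Complex x y1) (Complex x y2)"
    then have z: "Re z = x" by (auto simp: closed_segment_same_Re)
    have "1 \<le> \<bar>Re z\<bar>" using z assms by simp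
    also have "\<dots> \<le> norm z" by (rule abs_Re_le_cmod)
    finally have "1 \<le> norm z" .
    then have "1 \<le> norm z ^ Suc j" by (rule one_le_power)
    then have "exp (x*u) / norm z ^ Suc j \<le> exp (x*u)"
      by (simp add: divide_le_eq)
    then show "norm (phi j u z) \<le> exp (x*u)" by (simp add: norm_phi z)
  qed simp
  also have "norm (Complex x y2 - Complex x y1) = \<bar>y2 - y1\<bar>" by (simp add: cmod_def)
  finally show ?thesis .
qed

lemma bound_by_vanishing:
  fixes X B Rz :: real
  assumes "\<And>R. R \<ge> Rz \<Longrightarrow> X \<le> B + g R" and "(g \<longlongrightarrow> 0) at_top"
  shows "X \<le> B"
proof -
  have "((\<lambda>R. B + g R) \<longlongrightarrow> B + 0) at_top"
    by (intro tendsto_add tendsto_const assms(2))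
  moreover have ev: "eventually (\<lambda>R. X \<le> B + g R) at_top"
    using eventually_ge_at_top[of Rz] by eventually_elim (use assms(1) in auto)
  ultimately show ?thesis
    using tendsto_le[OF trivial_limit_at_top_linorder _ tendsto_const[of X] ev] by simp
qed

lemma exp_lin_to_0:
  fixes v K :: real
  assumes "v < 0"
  shows "((\<lambda>R. exp (R * v) * K) \<longlongrightarrow> 0) at_top"
proof -
  have "filterlim (\<lambda>R. v * R) at_bot at_top"
    by (intro filterlim_tendsto_neg_mult_at_bot[where c=v] tendsto_const assms filterlim_ident)
  then have "((\<lambda>R. exp (v * R)) \<longlongrightarrow> 0) at_top"
    by (rule filterlim_compose[OF exp_at_bot])
  then have "((\<lambda>R. exp (v * R) * K) \<longlongrightarrow> 0 * K) at_top"
    by (intro tendsto_mult tendsto_const)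
  then show ?thesis by (simp add: mult.commute)
qed

lemma right_bound:
  assumes u: "u < 0" and c: "c > 0" and T: "T > 0"
  shows "norm (contour_integral (linepath (Complex c (-T)) (Complex c T)) (phi j u))
           \<le> 2 * exp (c*u) / (\<bar>u\<bar> * T ^ Suc j)"
proof (rule bound_by_vanishing[where Rz = "c+1" and g = "\<lambda>R. exp (R*u) * (2*T)"])
  show "((\<lambda>R. exp (R*u) * (2*T)) \<longlongrightarrow> 0) at_top" by (rule exp_lin_to_0[OF u])
  fix R assume R: "c + 1 \<le> R"
  define a1 a2 a3 a4 where "a1 = Complex c (-T)" and "a2 = Complex R (-T)"
    and "a3 = Complex R T" and "a4 = Complex c T"
  have pimg: "path_image (rectpath a1 a3) \<subseteq> {s. Re s > 0}"
    using path_image_rectpath_subset_cbox[of a1 a3] R c T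
    by (auto simp: a1_def a3_def in_cbox_complex_iff)
  have "(phi j u has_contour_integral 0) (rectpath a1 a3)"
    by (rule Cauchy_theorem_convex_simple[OF phi_holo convex_halfspace_Re_gt]) (use pimg in auto)
  then have "contour_integral (rectpath a1 a3) (phi j u) = 0"
    by (rule contour_integral_unique)
  moreover have "contour_integral (rectpath a1 a3) (phi j u) =
      contour_integral (linepath a1 a2) (phi j u) + contour_integral (linepath a2 a3) (phi j u)
    + contour_integral (linepath a3 a4) (phi j u) + contour_integral (linepath a4 a1) (phi j u)"
  proof -
    have "0 \<notin> path_image (rectpath a1 a3)" using pimg by auto
    then have "continuous_on (path_image (rectpath a1 a3)) (phi j u)" by (rule phi_cont)
    from rect_split[OF this] show ?thesis by (simp add: a1_def a2_def a3_def a4_def)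
  qed
  moreover have "contour_integral (linepath a4 a1) (phi j u) = - contour_integral (linepath a1 a4) (phi j u)"
    using contour_integral_reversepath[of "linepath a1 a4" "phi j u"] by simp
  ultimately have eq: "contour_integral (linepath a1 a4) (phi j u) =
      contour_integral (linepath a1 a2) (phi j u) + contour_integral (linepath a2 a3) (phi j u)
    + contour_integral (linepath a3 a4) (phi j u)" by (simp add: algebra_simps)
  have le: "exp (R*u) \<le> exp (c*u)" using R u by (simp add: mult_right_mono_neg)
  have ab1: "\<bar>exp (R*u) - exp (c*u)\<bar> \<le> exp (c*u)" using le exp_gt_zero[of "R*u"] by linarith
  have ab2: "\<bar>exp (c*u) - exp (R*u)\<bar> \<le> exp (c*u)" using le exp_gt_zero[of "R*u"] by linarith
  have h1: "norm (contour_integral (linepath a1 a2) (phi j u)) \<le> exp (c*u) / (\<bar>u\<bar> * T ^ Suc j)"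
  proof -
    have "norm (contour_integral (linepath a1 a2) (phi j u)) \<le> \<bar>exp (R*u) - exp (c*u)\<bar> / (\<bar>u\<bar> * \<bar>-T\<bar> ^ Suc j)"
      unfolding a1_def a2_def by (rule horiz_bound) (use u T in auto)
    also have "\<dots> \<le> exp (c*u) / (\<bar>u\<bar> * T ^ Suc j)"
      using divide_right_mono[OF ab1, of "\<bar>u\<bar> * T^Suc j"] T by simp
    finally show ?thesis .
  qed
  have h3: "norm (contour_integral (linepath a3 a4) (phi j u)) \<le> exp (c*u) / (\<bar>u\<bar> * T ^ Suc j)"
  proof -
    have "norm (contour_integral (linepath a3 a4) (phi j u)) \<le> \<bar>exp (c*u) - exp (R*u)\<bar> / (\<bar>u\<bar> * \<bar>T\<bar> ^ Suc j)"
      unfolding a3_def a4_def by (rule horiz_bound) (use u T in auto)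
    also have "\<dots> \<le> exp (c*u) / (\<bar>u\<bar> * T ^ Suc j)"
      using divide_right_mono[OF ab2, of "\<bar>u\<bar> * T^Suc j"] T by simp
    finally show ?thesis .
  qed
  have h2: "norm (contour_integral (linepath a2 a3) (phi j u)) \<le> exp (R*u) * (2*T)"
    using vert_side_bound[of R "-T" T j u] R c T by (simp add: a2_def a3_def)
  have "norm (contour_integral (linepath a1 a4) (phi j u)) \<le>
      norm (contour_integral (linepath a1 a2) (phi j u)) + norm (contour_integral (linepath a2 a3) (phi j u))
    + norm (contour_integral (linepath a3 a4) (phi j u))"
    unfolding eq by (rule order_trans[OF norm_triangle_ineq add_right_mono[OF norm_triangle_ineq]])
  also have "\<dots> \<le> 2 * exp (c*u) / (\<bar>u\<bar> * T ^ Suc j) + exp (R*u) * (2*T)"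
  proof -
    have "2 * exp (c*u) / (\<bar>u\<bar> * T ^ Suc j) = 2 * (exp (c*u) / (\<bar>u\<bar> * T ^ Suc j))" by simp
    moreover obtain E where "E = exp (c*u) / (\<bar>u\<bar> * T ^ Suc j)" by blast
    ultimately show ?thesis using h1 h2 h3 
      by (metis (no_types, lifting) add_mono mult_2 add.commute add.left_commute)
  qed
  finally show "norm (contour_integral (linepath (Complex c (-T)) (Complex c T)) (phi j u))
     \<le> 2 * exp (c*u) / (\<bar>u\<bar> * T ^ Suc j) + exp (R*u) * (2*T)"
    by (simp add: a1_def a4_def)
qed

lemma higher_deriv_exp_lin:
  fixes w :: complex
  shows "(deriv ^^ k) (\<lambda>z. exp (z * w)) = (\<lambda>z. w ^ k * exp (z * w))"
proof (induction k)
  case 0 then show ?case by simp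
next
  case (Suc k)
  have "deriv (\<lambda>z. w ^ k * exp (z * w)) z = w ^ Suc k * exp (z * w)" for z
    by (rule DERIV_imp_deriv) (auto intro!: derivative_eq_intros simp: algebra_simps)
  then show ?case
    by (simp only: funpow.simps(2) o_apply Suc.IH)
qed

lemma residue_phi: "residue (phi j u) 0 = of_real (u ^ j / fact j)"
proof -
  have "phi j u = (\<lambda>z. exp (z * of_real u) / z ^ Suc j)" by (simp add: phi_def fun_eq_iff)
  moreover have "residue (\<lambda>z. exp (z * of_real u) / z ^ Suc j) 0 = (deriv ^^ j) (\<lambda>z. exp (z * of_real u)) 0 / fact j"
    by (rule residue_holomorphic_over_power'[of UNIV]) (auto intro!: holomorphic_intros)
  ultimately show ?thesis by (simp add: higher_deriv_exp_lin)
qed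

lemma left_bound:
  assumes u: "u > 0" and c: "c > 0" and T: "T > 0"
  shows "norm (contour_integral (linepath (Complex c (-T)) (Complex c T)) (phi j u)
              - 2 * pi * \<i> * of_real (u ^ j / fact j))
           \<le> 2 * exp (c*u) / (u * T ^ Suc j)"
proof (rule bound_by_vanishing[where Rz = "1" and g = "\<lambda>R. exp (R*(-u)) * (2*T)"])
  show "((\<lambda>R. exp (R*(-u)) * (2*T)) \<longlongrightarrow> 0) at_top" by (rule exp_lin_to_0) (use u in simp)
  fix R :: real assume R: "1 \<le> R"
  define a1 a2 a3 a4 where "a1 = Complex (-R) (-T)" and "a2 = Complex c (-T)"
    and "a3 = Complex c T" and "a4 = Complex (-R) T"
  have box: "0 \<in> box a1 a3" using R c T by (auto simp: a1_def a3_def in_box_complex_iff)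
  have le13: "Re a1 \<le> Re a3" "Im a1 \<le> Im a3" using R c T by (auto simp: a1_def a3_def)
  have nz: "0 \<notin> path_image (rectpath a1 a3)"
    using box by (simp add: path_image_rectpath_cbox_minus_box[OF le13])
  have "contour_integral (rectpath a1 a3) (phi j u) =
          2 * pi * \<i> * (\<Sum>p\<in>{0}. winding_number (rectpath a1 a3) p * residue (phi j u) p)"
    by (rule Residue_theorem[of UNIV]) (use nz in \<open>auto intro!: phi_holo\<close>)
  also have "\<dots> = 2 * pi * \<i> * of_real (u ^ j / fact j)"
    using winding_number_rectpath[OF box] residue_phi by simp
  finally have res: "contour_integral (rectpath a1 a3) (phi j u) = 2 * pi * \<i> * of_real (u ^ j / fact j)" .
  have "contour_integral (rectpath a1 a3) (phi j u) =
      contour_integral (linepath a1 a2) (phi j u) + contour_integral (linepath a2 a3) (phi j u)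
    + contour_integral (linepath a3 a4) (phi j u) + contour_integral (linepath a4 a1) (phi j u)"
  proof -
    have "continuous_on (path_image (rectpath a1 a3)) (phi j u)" using nz by (rule phi_cont)
    from rect_split[OF this] show ?thesis by (simp add: a1_def a2_def a3_def a4_def)
  qed
  then have eq: "contour_integral (linepath a2 a3) (phi j u) - 2 * pi * \<i> * of_real (u ^ j / fact j) =
      - (contour_integral (linepath a1 a2) (phi j u) + contour_integral (linepath a3 a4) (phi j u)
       + contour_integral (linepath a4 a1) (phi j u))"
    using res by (simp add: algebra_simps)
  have "0 \<le> R*u" "0 \<le> c*u" using R u c by simp_all
  then have le: "exp (-R*u) \<le> exp (c*u)" by simp
  have ab1: "\<bar>exp (c*u) - exp (-R*u)\<bar> \<le> exp (c*u)" using le exp_gt_zero[of "-R*u"] by linarith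
  have ab2: "\<bar>exp (-R*u) - exp (c*u)\<bar> \<le> exp (c*u)" using le exp_gt_zero[of "-R*u"] by linarith
  obtain E where E: "E = exp (c*u) / (u * T ^ Suc j)" by blast
  have h1: "norm (contour_integral (linepath a1 a2) (phi j u)) \<le> E"
  proof -
    have "norm (contour_integral (linepath a1 a2) (phi j u)) \<le> \<bar>exp (c*u) - exp ((-R)*u)\<bar> / (\<bar>u\<bar> * \<bar>-T\<bar> ^ Suc j)"
      unfolding a1_def a2_def by (rule horiz_bound) (use u T in auto)
    also have "\<dots> \<le> E"
      using divide_right_mono[OF ab1, of "u * T^Suc j"] T u E by simp
    finally show ?thesis .
  qed
  have h3: "norm (contour_integral (linepath a3 a4) (phi j u)) \<le> E"
  proof -
    have "norm (contour_integral (linepath a3 a4) (phi j u)) \<le> \<bar>exp ((-R)*u) - exp (c*u)\<bar> / (\<bar>u\<bar> * \<bar>T\<bar> ^ Suc j)"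
      unfolding a3_def a4_def by (rule horiz_bound) (use u T in auto)
    also have "\<dots> \<le> E"
      using divide_right_mono[OF ab2, of "u * T^Suc j"] T u E by simp
    finally show ?thesis .
  qed
  have h4: "norm (contour_integral (linepath a4 a1) (phi j u)) \<le> exp (R*(-u)) * (2*T)"
    using vert_side_bound[of "-R" T "-T" j u] R c T by (simp add: a4_def a1_def)
  have "norm (contour_integral (linepath a2 a3) (phi j u) - 2 * pi * \<i> * of_real (u ^ j / fact j)) \<le>
      norm (contour_integral (linepath a1 a2) (phi j u)) + norm (contour_integral (linepath a3 a4) (phi j u))
    + norm (contour_integral (linepath a4 a1) (phi j u))"
    unfolding eq norm_minus_cancel by (rule order_trans[OF norm_triangle_ineq add_right_mono[OF norm_triangle_ineq]])
  also have "\<dots> \<le> 2 * E + exp (R*(-u)) * (2*T)"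
    using h1 h3 h4 by linarith
  finally show "norm (contour_integral (linepath (Complex c (-T)) (Complex c T)) (phi j u)
              - 2 * pi * \<i> * of_real (u ^ j / fact j)) \<le> 2 * exp (c*u) / (u * T ^ Suc j) + exp (R*(-u)) * (2*T)"
    by (simp add: a2_def a3_def E)
qed

lemma seg_Re_pos:
  assumes "c > 0"
  shows "path_image (linepath (Complex c (-T)) (Complex c T)) \<subseteq> {s. Re s > 0}"
  using assms by (auto simp: closed_segment_same_Re)

lemma zero_lim0:
  assumes c: "c > 0"
  shows "((\<lambda>T. contour_integral (linepath (Complex c (-T)) (Complex c T)) (phi 0 0)) \<longlongrightarrow> \<i> * pi) at_top"
proof -
  have eq: "contour_integral (linepath (Complex c (-T)) (Complex c T)) (phi 0 0) = \<i> * of_real (2 * arctan ((1/c) * T))" for T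
  proof -
    have "(phi 0 0 has_contour_integral (Ln (Complex c T) - Ln (Complex c (-T)))) (linepath (Complex c (-T)) (Complex c T))"
    proof -
      have "(Ln has_field_derivative phi 0 0 x) (at x within {s. Re s > 0})" if "x \<in> {s. Re s > 0}" for x
      proof -
        have "x \<notin> \<real>\<^sub>\<le>\<^sub>0" using that by (auto simp: complex_nonpos_Reals_iff)
        then have "(Ln has_field_derivative inverse x) (at x)" by (rule has_field_derivative_Ln)
        then show ?thesis by (simp add: phi_def has_field_derivative_at_within divide_inverse)
      qed
      from contour_integral_primitive[OF this _ seg_Re_pos[OF c]] show ?thesis by simp
    qed
    then have "contour_integral (linepath (Complex c (-T)) (Complex c T)) (phi 0 0) = Ln (Complex c T) - Ln (Complex c (-T))"
      by (rule contour_integral_unique)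
    also have "\<dots> = \<i> * of_real (2 * arctan ((1/c) * T))"
    proof -
      have n: "Complex c T \<noteq> 0" "Complex c (-T) \<noteq> 0" using c by (auto simp: complex_eq_iff)
      have "norm (Complex c T) = norm (Complex c (-T))" by (simp add: cmod_def)
      moreover have "Im (Ln (Complex c T)) = arctan (T / c)" 
        using n c by (subst Im_Ln_eq) auto
      moreover have "Im (Ln (Complex c (-T))) = - arctan (T / c)"
        using n c by (subst Im_Ln_eq) (auto simp: arctan_minus)
      ultimately show ?thesis using n
        by (simp add: complex_eq_iff)
    qed
    finally show ?thesis .
  qed
  have "filterlim (\<lambda>T. (1/c) * T) at_top at_top"
    by (rule filterlim_tendsto_pos_mult_at_top[OF tendsto_const _ filterlim_ident]) (use c in simp)
  then have "((\<lambda>T. arctan ((1/c) * T)) \<longlongrightarrow> pi/2) at_top"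
    by (rule filterlim_compose[OF tendsto_arctan_at_top])
  then have "((\<lambda>T. \<i> * of_real (2 * arctan ((1/c) * T))) \<longlongrightarrow> \<i> * of_real (2 * (pi/2))) at_top"
    by (intro tendsto_intros)
  then show ?thesis unfolding eq by simp
qed

lemma zero_limj:
  assumes c: "c > 0" and j: "j \<ge> 1"
  shows "((\<lambda>T. contour_integral (linepath (Complex c (-T)) (Complex c T)) (phi j 0)) \<longlongrightarrow> 0) at_top"
proof -
  obtain k where k: "j = Suc k" using j by (cases j) auto
  define F where "F s = - (inverse (of_nat j) * inverse (s ^ j))" for s :: complex
  have eq: "contour_integral (linepath (Complex c (-T)) (Complex c T)) (phi j 0) = F (Complex c T) - F (Complex c (-T))" for T
  proof -
    have "(F has_field_derivative phi j 0 x) (at x within {s. Re s > 0})" if "x \<in> {s. Re s > 0}" for x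
    proof -
      have x: "x \<noteq> 0" using that by auto
      have d1: "((\<lambda>s. s ^ j) has_field_derivative of_nat j * x ^ k) (at x)"
        using DERIV_power_Suc[OF DERIV_ident, where n=k and x=x and s=UNIV] unfolding k by (simp add: algebra_simps)
      have d2: "((\<lambda>s. inverse (s ^ j)) has_field_derivative - ((of_nat j * x ^ k) * inverse ((x^j) ^ Suc (Suc 0)))) (at x)"
        by (rule DERIV_inverse_fun[OF d1]) (use x in simp)
      have d3: "(F has_field_derivative - (inverse (of_nat j) * - ((of_nat j * x ^ k) * inverse ((x^j) ^ Suc (Suc 0))))) (at x)"
        unfolding F_def by (intro DERIV_minus DERIV_cmult d2)
      have "- (inverse (of_nat j) * - ((of_nat j * x ^ k) * inverse ((x^j) ^ Suc (Suc 0)))) = phi j 0 x"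
      proof -
        have xj: "x^j = x * x^k" by (simp add: k)
        have nz: "(of_nat j :: complex) \<noteq> 0" using j by (simp del: of_nat_Suc)
        show ?thesis unfolding phi_def using x nz by (simp add: xj field_simps power2_eq_square)
      qed
      with d3 show ?thesis by (simp add: has_field_derivative_at_within)
    qed
    from contour_integral_primitive[OF this _ seg_Re_pos[OF c]] show ?thesis
      by (simp add: contour_integral_unique)
  qed
  have nF: "norm (F s) \<le> inverse (T ^ j)" if "T > 0" "\<bar>Im s\<bar> = T" for s T
  proof -
    have "T \<le> norm s" using abs_Im_le_cmod[of s] that by simp
    then have f1: "T ^ j \<le> norm s ^ j" using that by (intro power_mono) auto
    have f2: "T ^ j > 0" using that by simp
    have f3: "norm s ^ j \<le> of_nat j * norm s ^ j"
      using mult_right_mono[of 1 "real j" "norm s ^ j"] j by simp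
    have "inverse (of_nat j * norm s ^ j) \<le> inverse (T ^ j)"
      by (rule le_imp_inverse_le[OF order_trans[OF f1 f3] f2])
    then show ?thesis by (simp add: F_def norm_mult norm_power norm_inverse)
  qed
  have ev: "eventually (\<lambda>T. norm (F (Complex c T) - F (Complex c (-T))) \<le> 2 * inverse (T ^ j)) at_top"
    using eventually_gt_at_top[of 0]
  proof eventually_elim
    case (elim T)
    have "norm (F (Complex c T) - F (Complex c (-T))) \<le> norm (F (Complex c T)) + norm (F (Complex c (-T)))"
      by (rule norm_triangle_ineq4)
    also have "\<dots> \<le> inverse (T ^ j) + inverse (T ^ j)" using nF[of T] elim by (intro add_mono) auto
    finally show ?case by simp
  qed
  have "filterlim (\<lambda>T::real. T ^ j) at_top at_top"
    using j by (intro filterlim_pow_at_top filterlim_ident) auto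
  then have "((\<lambda>T::real. 2 * inverse (T ^ j)) \<longlongrightarrow> 2 * 0) at_top"
    by (intro tendsto_mult tendsto_const tendsto_inverse_0_at_top)
  then show ?thesis unfolding eq by (intro Lim_null_comparison[OF ev]) simp
qed


definition Pf :: "nat \<Rightarrow> complex \<Rightarrow> complex" where
  "Pf n s = (s - 1) ^ n / s ^ (n + 1)"

definition bco :: "nat \<Rightarrow> nat \<Rightarrow> complex" where
  "bco n j = (-1) ^ j * of_nat (n choose j)"

lemma Pf_exp:
  assumes s: "s \<noteq> 0"
  shows "Pf n s * exp (s * of_real u) = (\<Sum>j=0..n. bco n j * phi j u s)"
proof -
  have e1: "(-(1/s)) + 1 = (s - 1) / s" using s by (simp add: field_simps)
  have "Pf n s = (1/s) * ((-(1/s)) + 1) ^ n"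
    unfolding Pf_def e1 power_divide by simp
  also have "((-(1/s)) + 1) ^ n = (\<Sum>j=0..n. of_nat (n choose j) * (-(1/s)) ^ j * 1 ^ (n - j))"
    using binomial_ring[of "-(1/s)" 1 n] by (simp only: atMost_atLeast0)
  finally have "Pf n s = (\<Sum>j=0..n. (1/s) * (of_nat (n choose j) * (-(1/s)) ^ j))"
    by (simp add: sum_distrib_left)
  then have "Pf n s * exp (s * of_real u) = (\<Sum>j=0..n. (1/s) * (of_nat (n choose j) * (-(1/s)) ^ j) * exp (s * of_real u))"
    by (simp add: sum_distrib_right)
  also have "\<dots> = (\<Sum>j=0..n. bco n j * phi j u s)"
  proof (rule sum.cong[OF refl])
    fix j
    have "(-(1/s)) ^ j = (-1) ^ j / s ^ j" by (simp only: minus_divide_left power_divide power_one)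
    then show "(1/s) * (of_nat (n choose j) * (-(1/s)) ^ j) * exp (s * of_real u) = bco n j * phi j u s"
      unfolding bco_def phi_def power_Suc by (simp add: divide_inverse inverse_mult_distrib ac_simps)
  qed
  finally show ?thesis .
qed

definition Gc :: "nat \<Rightarrow> real \<Rightarrow> real \<Rightarrow> real \<Rightarrow> complex" where
  "Gc n c u T = contour_integral (linepath (Complex c (-T)) (Complex c T)) (\<lambda>s. Pf n s * exp (s * of_real u))"

abbreviation CI :: "real \<Rightarrow> nat \<Rightarrow> real \<Rightarrow> real \<Rightarrow> complex" where
  "CI c j u T \<equiv> contour_integral (linepath (Complex c (-T)) (Complex c T)) (phi j u)"

lemma seg_nz: "c > 0 \<Longrightarrow> 0 \<notin> closed_segment (Complex c (-T)) (Complex c T)"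
  by (auto simp: closed_segment_same_Re)

lemma Gc_sum:
  assumes c: "c > 0"
  shows "Gc n c u T = (\<Sum>j=0..n. bco n j * CI c j u T)"
proof -
  have ci: "phi j u contour_integrable_on linepath (Complex c (-T)) (Complex c T)" for j
    by (intro contour_integrable_continuous_linepath phi_cont seg_nz c)
  have "Gc n c u T = contour_integral (linepath (Complex c (-T)) (Complex c T)) (\<lambda>s. \<Sum>j=0..n. bco n j * phi j u s)"
    unfolding Gc_def
  proof (rule contour_integral_eq)
    fix x assume "x \<in> path_image (linepath (Complex c (-T)) (Complex c T))"
    then have "x \<noteq> 0" using seg_nz[OF c, of T] by auto
    then show "Pf n x * exp (x * of_real u) = (\<Sum>j=0..n. bco n j * phi j u x)" by (rule Pf_exp)
  qed
  also have "\<dots> = (\<Sum>j=0..n. contour_integral (linepath (Complex c (-T)) (Complex c T)) (\<lambda>s. bco n j * phi j u s))"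
    by (rule contour_integral_sum) (auto intro!: contour_integrable_lmul ci)
  also have "\<dots> = (\<Sum>j=0..n. bco n j * CI c j u T)"
    by (intro sum.cong refl contour_integral_lmul ci)
  finally show ?thesis .
qed

lemma norm_bco: "norm (bco n j) = real (n choose j)"
  by (simp add: bco_def norm_mult norm_power)

lemma Gc_bound:
  assumes c: "c > 0" and u: "u \<le> -1" and T: "T \<ge> 1"
  shows "norm (Gc n c u T) \<le> 2 ^ (n+1) * exp (c*u)"
proof -
  have "norm (Gc n c u T) \<le> (\<Sum>j=0..n. norm (bco n j * CI c j u T))"
    unfolding Gc_sum[OF c] by (rule norm_sum)
  also have "\<dots> \<le> (\<Sum>j=0..n. real (n choose j) * (2 * exp (c*u)))"
  proof (rule sum_mono)
    fix j
    have "norm (CI c j u T) \<le> 2 * exp (c*u) / (\<bar>u\<bar> * T ^ Suc j)"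
      by (rule right_bound) (use u c T in auto)
    also have "\<dots> \<le> 2 * exp (c*u)"
    proof -
      have "1 \<le> \<bar>u\<bar> * T ^ Suc j"
        using u T mult_mono[of 1 "\<bar>u\<bar>" 1 "T ^ Suc j"] one_le_power[of T "Suc j"] by auto
      then show ?thesis by (simp add: divide_le_eq mult_le_cancel_left1)
    qed
    finally show "norm (bco n j * CI c j u T) \<le> real (n choose j) * (2 * exp (c*u))"
      unfolding norm_mult norm_bco by (rule mult_left_mono) simp
  qed
  also have "\<dots> = 2 ^ n * (2 * exp (c*u))"
    using choose_row_sum[of n] by (simp add: sum_distrib_right[symmetric] atMost_atLeast0 flip: of_nat_sum)
  finally show ?thesis by simp
qed

lemma inv_pow_to_0: "((\<lambda>T::real. K / T ^ Suc j) \<longlongrightarrow> 0) at_top"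
proof -
  have "filterlim (\<lambda>T::real. T ^ Suc j) at_top at_top"
    by (intro filterlim_pow_at_top filterlim_ident) auto
  then have "((\<lambda>T::real. K * inverse (T ^ Suc j)) \<longlongrightarrow> K * 0) at_top"
    by (intro tendsto_mult tendsto_const tendsto_inverse_0_at_top)
  then show ?thesis by (simp add: divide_inverse)
qed

lemma CI_lim_neg:
  assumes c: "c > 0" and u: "u < 0"
  shows "((\<lambda>T. CI c j u T) \<longlongrightarrow> 0) at_top"
proof (rule Lim_null_comparison)
  show "eventually (\<lambda>T. norm (CI c j u T) \<le> (2 * exp (c*u) / \<bar>u\<bar>) / T ^ Suc j) at_top"
    using eventually_gt_at_top[of 0] by eventually_elim (use right_bound[OF u c] in simp)
  show "((\<lambda>T. (2 * exp (c*u) / \<bar>u\<bar>) / T ^ Suc j) \<longlongrightarrow> 0) at_top" by (rule inv_pow_to_0)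
qed

lemma CI_lim_pos:
  assumes c: "c > 0" and u: "u > 0"
  shows "((\<lambda>T. CI c j u T) \<longlongrightarrow> 2 * pi * \<i> * of_real (u ^ j / fact j)) at_top"
proof (rule LIM_zero_cancel, rule Lim_null_comparison)
  show "eventually (\<lambda>T. norm (CI c j u T - 2 * pi * \<i> * of_real (u ^ j / fact j)) \<le> (2 * exp (c*u) / u) / T ^ Suc j) at_top"
    using eventually_gt_at_top[of 0] by eventually_elim (use left_bound[OF u c] in simp)
  show "((\<lambda>T. (2 * exp (c*u) / u) / T ^ Suc j) \<longlongrightarrow> 0) at_top" by (rule inv_pow_to_0)
qed

lemma laguerre_complex: "of_real (laguerre n u) = (\<Sum>j=0..n. bco n j * of_real (u ^ j / fact j))"
  unfolding laguerre_def of_real_sum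
proof (intro sum.cong refl)
  fix j
  have "real (n choose j) * (- u) ^ j / fact j = ((-1) ^ j * real (n choose j)) * (u ^ j / fact j)"
    by (simp only: power_minus[of u] mult_ac times_divide_eq_right)
  then show "complex_of_real (real (n choose j) * (- u) ^ j / fact j) = bco n j * complex_of_real (u ^ j / fact j)"
    unfolding bco_def by (simp only: of_real_mult of_real_power of_real_minus of_real_1 of_real_of_nat_eq)
qed

lemma sum_factor_out: "(\<Sum>j\<in>A. b j * (K * x j)) = K * (\<Sum>j\<in>A. b j * x j)" for K :: complex
  by (simp add: sum_distrib_left mult.left_commute)

lemma Gc_lim:
  assumes c: "c > 0"
  shows "((\<lambda>T. Gc n c u T) \<longlongrightarrow> 2 * pi * \<i> * of_real (step_h u * laguerre n u)) at_top"
proof (cases u "0::real" rule: linorder_cases)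
  case less
  have "((\<lambda>T. \<Sum>j=0..n. bco n j * CI c j u T) \<longlongrightarrow> (\<Sum>j=0..n. bco n j * 0)) at_top"
    by (intro tendsto_sum tendsto_mult tendsto_const CI_lim_neg c less)
  then show ?thesis using less by (simp add: Gc_sum[OF c] step_h_def)
next
  case greater
  have "((\<lambda>T. \<Sum>j=0..n. bco n j * CI c j u T) \<longlongrightarrow> (\<Sum>j=0..n. bco n j * (2 * pi * \<i> * of_real (u ^ j / fact j)))) at_top"
    by (intro tendsto_sum tendsto_mult tendsto_const CI_lim_pos c greater)
  moreover have "(\<Sum>j=0..n. bco n j * (2 * pi * \<i> * of_real (u ^ j / fact j))) = 2 * pi * \<i> * of_real (step_h u * laguerre n u)"
  proof -
    have h1: "step_h u = 1" using greater by (simp add: step_h_def)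
    show ?thesis by (simp only: h1 mult_1 sum_factor_out laguerre_complex)
  qed
  ultimately show ?thesis by (simp add: Gc_sum[OF c])
next
  case equal
  have lim: "((\<lambda>T. CI c j 0 T) \<longlongrightarrow> (if j = 0 then \<i> * pi else 0)) at_top" for j
    using zero_lim0[OF c] zero_limj[OF c, of j] by (cases j) auto
  have "((\<lambda>T. \<Sum>j=0..n. bco n j * CI c j 0 T) \<longlongrightarrow> (\<Sum>j=0..n. bco n j * (if j = 0 then \<i> * pi else 0))) at_top"
    by (intro tendsto_sum tendsto_mult tendsto_const lim)
  moreover have "(\<Sum>j=0..n. bco n j * (if j = 0 then \<i> * pi else 0)) = \<i> * pi"
  proof -
    have "(\<Sum>j=0..n. bco n j * (if j = 0 then \<i> * pi else 0)) = (\<Sum>j=0..n. if j = 0 then \<i> * pi else 0)"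
      by (intro sum.cong refl) (auto simp: bco_def)
    then show ?thesis by simp
  qed
  moreover have "laguerre n 0 = 1"
  proof -
    have "laguerre n 0 = (\<Sum>\<nu>=0..n. if \<nu> = 0 then 1 else 0)"
      unfolding laguerre_def by (intro sum.cong refl) auto
    then show ?thesis by simp
  qed
  moreover have "2 * pi * \<i> * of_real (step_h 0 * laguerre n 0) = \<i> * complex_of_real pi"
    using \<open>laguerre n 0 = 1\<close> by (simp add: step_h_def)
  ultimately show ?thesis using equal by (simp only: Gc_sum[OF c])
qed




definition Er :: "real \<Rightarrow> nat \<Rightarrow> real" where
  "Er c k = exp (- (c * ln (real k)))"

definition Ec :: "complex \<Rightarrow> nat \<Rightarrow> complex" where
  "Ec s k = exp (- (s * of_real (ln (real k))))"

lemma Ec_eq: "1 / (of_nat (Suc m)) powr s = Ec s (Suc m)"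
proof -
  have "(of_nat (Suc m) :: complex) powr s = exp (s * of_real (ln (real (Suc m))))"
    unfolding powr_def by (simp del: of_nat_Suc)
  then show ?thesis by (simp add: Ec_def exp_minus divide_inverse del: of_nat_Suc)
qed

lemma zeta_eq: "zeta_series s = (\<Sum>m. Ec s (Suc m))"
  unfolding zeta_series_def Ec_eq ..

lemma norm_Ec: "norm (Ec s k) = Er (Re s) k"
  by (simp add: Ec_def Er_def norm_exp_eq_Re)

lemma Er_nonneg: "Er c k \<ge> 0" by (simp add: Er_def)

lemma Er_powr: "k \<ge> 1 \<Longrightarrow> Er c k = real k powr (-c)"
  by (simp add: Er_def powr_def)

lemma summable_Er:
  assumes "c > 1"
  shows "summable (\<lambda>m. Er c (Suc m))"
proof -
  have "summable (\<lambda>n. real n powr (-c))" using assms by (subst summable_real_powr_iff) simp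
  then have "summable (\<lambda>m. real (Suc m) powr (-c))" by (subst summable_Suc_iff)
  then show ?thesis by (simp add: Er_powr del: of_nat_Suc)
qed

lemma summable_Ec:
  assumes "Re s > 1"
  shows "summable (\<lambda>m. Ec s (Suc m))"
  by (rule summable_norm_cancel, unfold norm_Ec) (rule summable_Er[OF assms])

lemma Ksum_shift: "(\<Sum>k\<in>{1..K}. f k) = (\<Sum>m<K. f (Suc m))"
  by (simp add: sum.atLeast1_atMost_eq)

lemma zeta_tail:
  assumes s: "Re s > 1"
  shows "norm (zeta_series s - (\<Sum>k\<in>{1..K}. Ec s k)) \<le> (\<Sum>m. Er (Re s) (Suc m)) - (\<Sum>k\<in>{1..K}. Er (Re s) k)"
proof -
  have "zeta_series s - (\<Sum>k\<in>{1..K}. Ec s k) = (\<Sum>m. Ec s (Suc (m + K)))"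
    unfolding zeta_eq Ksum_shift using suminf_minus_initial_segment[OF summable_Ec[OF s], of K]
    by simp
  also have "norm \<dots> \<le> (\<Sum>m. Er (Re s) (Suc (m + K)))"
  proof (rule norm_suminf_le)
    show "summable (\<lambda>m. Er (Re s) (Suc (m + K)))"
      using summable_Er[OF s] summable_iff_shift[of "\<lambda>m. Er (Re s) (Suc m)" K] by simp
  qed (simp add: norm_Ec)
  also have "\<dots> = (\<Sum>m. Er (Re s) (Suc m)) - (\<Sum>k\<in>{1..K}. Er (Re s) k)"
    unfolding Ksum_shift using suminf_minus_initial_segment[OF summable_Er[OF s], of K]
    by simp
  finally show ?thesis .
qed

lemma partial_le_zeta:
  assumes "c > 1"
  shows "(\<Sum>k\<in>{1..K}. Er c k) \<le> (\<Sum>m. Er c (Suc m))"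
  unfolding Ksum_shift by (rule sum_le_suminf[OF summable_Er[OF assms]]) (auto simp: Er_nonneg)

lemma norm_partial:
  "norm (\<Sum>k\<in>{1..K}. Ec s k) \<le> (\<Sum>k\<in>{1..K}. Er (Re s) k)"
  by (rule order_trans[OF norm_sum]) (simp add: norm_Ec)

lemma norm_zeta:
  assumes s: "Re s > 1"
  shows "norm (zeta_series s) \<le> (\<Sum>m. Er (Re s) (Suc m))"
  unfolding zeta_eq by (rule norm_suminf_le) (auto simp: norm_Ec summable_Er[OF s])

lemma zeta_ge1:
  assumes "c > 1"
  shows "(\<Sum>m. Er c (Suc m)) \<ge> 1"
  using partial_le_zeta[OF assms, of 1] by (simp add: Er_def)

lemma sum_lists_prod:
  fixes f :: "'b \<Rightarrow> 'a::comm_semiring_1"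
  assumes A: "finite A"
  shows "(\<Sum>xs\<in>{xs. set xs \<subseteq> A \<and> length xs = n}. prod_list (map f xs)) = (sum f A) ^ n"
proof (induction n)
  case 0
  have "{xs. set xs \<subseteq> A \<and> length xs = 0} = {[]}" by auto
  then show ?case by simp
next
  case (Suc n)
  let ?L = "{xs. set xs \<subseteq> A \<and> length xs = n}"
  have "(\<Sum>xs\<in>{xs. set xs \<subseteq> A \<and> length xs = Suc n}. prod_list (map f xs))
        = (\<Sum>p\<in>?L \<times> A. prod_list (map f ((\<lambda>(xs, x). x # xs) p)))"
    unfolding lists_length_Suc_eq by (rule sum.reindex[OF inj_split_Cons, unfolded o_def])
  also have "\<dots> = (\<Sum>xs\<in>?L. \<Sum>x\<in>A. f x * prod_list (map f xs))"
    by (subst sum.cartesian_product) (simp add: case_prod_unfold)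
  also have "\<dots> = (\<Sum>xs\<in>?L. sum f A * prod_list (map f xs))"
    by (simp add: sum_distrib_right)
  also have "\<dots> = sum f A * (sum f A) ^ n"
    by (simp add: sum_distrib_left[symmetric] Suc.IH)
  finally show ?case by simp
qed

lemma finite_Lk: "finite {xs. set xs \<subseteq> {1..K::nat} \<and> length xs = n}"
  by (rule finite_lists_length_eq) simp

lemma prod_Ec:
  assumes "\<forall>k\<in>set ks. k \<ge> 1"
  shows "prod_list (map (Ec s) ks) = Ec s (prod_list ks)"
  using assms
proof (induction ks)
  case Nil then show ?case by (simp add: Ec_def)
next
  case (Cons k ks)
  have k: "k \<ge> 1" and ks: "\<forall>k\<in>set ks. k \<ge> 1" using Cons.prems by auto
  have "prod_list ks \<ge> 1" using ks by (induction ks) auto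
  then have "ln (real (k * prod_list ks)) = ln (real k) + ln (real (prod_list ks))"
    using k by (simp add: ln_mult)
  then show ?case using Cons.IH[OF ks]
    by (simp add: Ec_def exp_add[symmetric] algebra_simps)
qed

lemma prod_Er:
  assumes "\<forall>k\<in>set ks. k \<ge> 1"
  shows "prod_list (map (Er c) ks) = Er c (prod_list ks)"
  using assms
proof (induction ks)
  case Nil then show ?case by (simp add: Er_def)
next
  case (Cons k ks)
  have k: "k \<ge> 1" and ks: "\<forall>k\<in>set ks. k \<ge> 1" using Cons.prems by auto
  have "prod_list ks \<ge> 1" using ks by (induction ks) auto
  then have "ln (real (k * prod_list ks)) = ln (real k) + ln (real (prod_list ks))"
    using k by (simp add: ln_mult)
  then show ?case using Cons.IH[OF ks]
    by (simp add: Er_def exp_add[symmetric] algebra_simps)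
qed

lemma Pf_cont: "0 \<notin> S \<Longrightarrow> continuous_on S (\<lambda>s. Pf n s * exp (s * of_real u))"
  unfolding Pf_def by (intro continuous_intros) auto

lemma vert_has_integral:
  assumes c: "c > 0" and T: "T > 0"
  shows "((\<lambda>y. Pf n (Complex c y) * exp (Complex c y * of_real u)) has_integral (-\<i> * Gc n c u T)) {-T..T}"
proof -
  have "((\<lambda>s. Pf n s * exp (s * of_real u)) has_contour_integral Gc n c u T) (linepath (Complex c (-T)) (Complex c T))"
    unfolding Gc_def
    by (intro has_contour_integral_integral contour_integrable_continuous_linepath Pf_cont seg_nz c)
  then show ?thesis
    by (subst (asm) has_contour_integral_linepath_same_Re_iff[where c=c and a="-T" and b=T]) (use T in auto)
qed

lemma norm_Pf:
  assumes "Re s \<ge> 1"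
  shows "norm (Pf n s) \<le> 1 / Re s"
proof -
  have s0: "s \<noteq> 0" using assms by auto
  have "norm (s - 1) \<le> norm s"
  proof -
    have "norm (s - 1) ^ 2 = (Re s - 1)^2 + (Im s)^2" by (simp add: cmod_def)
    also have "\<dots> \<le> (Re s)^2 + (Im s)^2" using assms by (simp add: power2_eq_square algebra_simps)
    also have "\<dots> = norm s ^ 2" by (simp add: cmod_def)
    finally show ?thesis using power2_le_imp_le by auto
  qed
  then have "norm (s - 1) ^ n \<le> norm s ^ n" by (intro power_mono) auto
  then have "norm (Pf n s) \<le> norm s ^ n / norm s ^ (n+1)"
    unfolding Pf_def norm_divide norm_power using s0 by (intro divide_right_mono) auto
  also have "\<dots> = 1 / norm s" using s0 by simp
  also have "\<dots> \<le> 1 / Re s" using assms abs_Re_le_cmod[of s]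
  proof -
    have "0 < Re s" "Re s \<le> norm s" using assms abs_Re_le_cmod[of s] by auto
    then show ?thesis by (intro divide_left_mono) (auto intro!: mult_pos_pos)
  qed
  finally show ?thesis .
qed

lemma norm_pow_diff:
  fixes a b :: complex
  assumes Z: "Z \<ge> 1" and a: "norm a \<le> Z" and b: "norm b \<le> Z"
  shows "norm (a ^ n - b ^ n) \<le> real n * Z ^ n * norm (a - b)"
proof (induction n)
  case 0 then show ?case by simp
next
  case (Suc n)
  have "a ^ Suc n - b ^ Suc n = a * (a ^ n - b ^ n) + (a - b) * b ^ n" by (simp add: algebra_simps)
  then have "norm (a ^ Suc n - b ^ Suc n) \<le> norm a * norm (a ^ n - b ^ n) + norm (a - b) * norm b ^ n"
    by (metis norm_mult norm_power norm_triangle_ineq)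
  also have "\<dots> \<le> Z * (real n * Z ^ n * norm (a - b)) + norm (a - b) * Z ^ n"
    using Suc.IH a b Z by (intro add_mono mult_mono power_mono) auto
  also have "\<dots> \<le> Z * (real n * Z ^ n * norm (a - b)) + norm (a - b) * Z ^ Suc n"
  proof -
    have "Z ^ n \<le> Z ^ Suc n" using Z by (simp add: power_increasing)
    then show ?thesis by (intro add_left_mono mult_left_mono) auto
  qed
  also have "\<dots> = real (Suc n) * Z ^ Suc n * norm (a - b)" by (simp add: algebra_simps)
  finally show ?case .
qed

definition LK :: "nat \<Rightarrow> nat \<Rightarrow> nat list set" where
  "LK n K = {xs. set xs \<subseteq> {1..K} \<and> length xs = n}"

definition FiK :: "nat \<Rightarrow> real \<Rightarrow> real \<Rightarrow> nat \<Rightarrow> real \<Rightarrow> complex" where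
  "FiK n c t K y = Pf n (Complex c y) * exp (Complex c y * of_real t) * (\<Sum>k\<in>{1..K}. Ec (Complex c y) k) ^ n"

definition Fi :: "nat \<Rightarrow> real \<Rightarrow> real \<Rightarrow> real \<Rightarrow> complex" where
  "Fi n c t y = F_fun n (Complex c y) * exp (Complex c y * complex_of_real t)"

lemma finite_LK: "finite (LK n K)"
  unfolding LK_def by (rule finite_Lk)

lemma LK_ge1: "ks \<in> LK n K \<Longrightarrow> \<forall>k\<in>set ks. k \<ge> 1"
  unfolding LK_def by auto

lemma FiK_expand:
  "FiK n c t K y = (\<Sum>ks\<in>LK n K. Pf n (Complex c y) * exp (Complex c y * of_real (t - ln (real (prod_list ks)))))"
proof -
  let ?s = "Complex c y"
  have "(\<Sum>k\<in>{1..K}. Ec ?s k) ^ n = (\<Sum>ks\<in>LK n K. prod_list (map (Ec ?s) ks))"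
    unfolding LK_def by (rule sum_lists_prod[symmetric]) simp
  also have "\<dots> = (\<Sum>ks\<in>LK n K. Ec ?s (prod_list ks))"
    by (intro sum.cong refl prod_Ec LK_ge1) auto
  finally have e: "(\<Sum>k\<in>{1..K}. Ec ?s k) ^ n = (\<Sum>ks\<in>LK n K. Ec ?s (prod_list ks))" .
  have e2: "exp (?s * of_real t) * Ec ?s M = exp (?s * of_real (t - ln (real M)))" for M
    unfolding Ec_def by (simp add: exp_add[symmetric] algebra_simps)
  show ?thesis
    unfolding FiK_def e sum_distrib_left
    by (intro sum.cong refl) (simp only: mult.assoc e2)
qed

lemma FiK_has_integral:
  assumes c: "c > 0" and T: "T > 0"
  shows "(FiK n c t K has_integral (\<Sum>ks\<in>LK n K. -\<i> * Gc n c (t - ln (real (prod_list ks))) T)) {-T..T}"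
proof -
  have "((\<lambda>y. \<Sum>ks\<in>LK n K. Pf n (Complex c y) * exp (Complex c y * of_real (t - ln (real (prod_list ks)))))
          has_integral (\<Sum>ks\<in>LK n K. -\<i> * Gc n c (t - ln (real (prod_list ks))) T)) {-T..T}"
    by (intro has_integral_sum finite_LK vert_has_integral c T)
  then show ?thesis by (simp only: FiK_expand[symmetric])
qed

lemma Fi_eq: "Fi n c t y = Pf n (Complex c y) * exp (Complex c y * of_real t) * zeta_series (Complex c y) ^ n"
  unfolding Fi_def F_fun_def Pf_def by (simp add: ac_simps)

lemma Fi_diff_bound:
  assumes c: "c > 1"
  shows "norm (Fi n c t y - FiK n c t K y) \<le>
     exp (c*t) / c * (real n * (\<Sum>m. Er c (Suc m)) ^ n * ((\<Sum>m. Er c (Suc m)) - (\<Sum>k\<in>{1..K}. Er c k)))"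
proof -
  let ?s = "Complex c y"
  let ?Z = "\<Sum>m. Er c (Suc m)"
  have s: "Re ?s > 1" using c by simp
  have "Fi n c t y - FiK n c t K y = Pf n ?s * exp (?s * of_real t) * (zeta_series ?s ^ n - (\<Sum>k\<in>{1..K}. Ec ?s k) ^ n)"
    unfolding Fi_eq FiK_def by (simp add: algebra_simps)
  also have "norm \<dots> = norm (Pf n ?s) * exp (c*t) * norm (zeta_series ?s ^ n - (\<Sum>k\<in>{1..K}. Ec ?s k) ^ n)"
    by (simp add: norm_mult norm_exp_eq_Re)
  also have "\<dots> \<le> (1/c) * exp (c*t) * (real n * ?Z ^ n * (?Z - (\<Sum>k\<in>{1..K}. Er c k)))"
  proof (intro mult_mono)
    show "norm (Pf n ?s) \<le> 1/c" using norm_Pf[of ?s n] c by simp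
    have "norm (zeta_series ?s ^ n - (\<Sum>k\<in>{1..K}. Ec ?s k) ^ n) \<le> real n * ?Z ^ n * norm (zeta_series ?s - (\<Sum>k\<in>{1..K}. Ec ?s k))"
    proof (rule norm_pow_diff)
      show "1 \<le> ?Z" by (rule zeta_ge1[OF c])
      show "norm (zeta_series ?s) \<le> ?Z" using norm_zeta[OF s] by simp
      show "norm (\<Sum>k\<in>{1..K}. Ec ?s k) \<le> ?Z"
        using norm_partial[where K=K and s="?s"] partial_le_zeta[OF c, of K] by simp
    qed
    also have "\<dots> \<le> real n * ?Z ^ n * (?Z - (\<Sum>k\<in>{1..K}. Er c k))"
      using zeta_tail[OF s, of K] zeta_ge1[OF c] by (intro mult_left_mono) auto
    finally show "norm (zeta_series ?s ^ n - (\<Sum>k\<in>{1..K}. Ec ?s k) ^ n) \<le> real n * ?Z ^ n * (?Z - (\<Sum>k\<in>{1..K}. Er c k))" .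
  qed (use c in auto)
  finally show ?thesis by simp
qed

lemma partial_lim:
  assumes "c > 1"
  shows "(\<lambda>K. \<Sum>k\<in>{1..K}. Er c k) \<longlonglongrightarrow> (\<Sum>m. Er c (Suc m))"
  unfolding Ksum_shift by (rule summable_LIMSEQ[OF summable_Er[OF assms]])

lemma D_lim:
  assumes "c > 1"
  shows "(\<lambda>K. exp (c*t) / c * (real n * (\<Sum>m. Er c (Suc m)) ^ n * ((\<Sum>m. Er c (Suc m)) - (\<Sum>k\<in>{1..K}. Er c k)))) \<longlonglongrightarrow> 0"
proof -
  have "(\<lambda>K. exp (c*t) / c * (real n * (\<Sum>m. Er c (Suc m)) ^ n * ((\<Sum>m. Er c (Suc m)) - (\<Sum>k\<in>{1..K}. Er c k))))
      \<longlonglongrightarrow> exp (c*t) / c * (real n * (\<Sum>m. Er c (Suc m)) ^ n * ((\<Sum>m. Er c (Suc m)) - (\<Sum>m. Er c (Suc m))))"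
    by (intro tendsto_intros partial_lim assms)
  then show ?thesis by simp
qed

lemma Fi_integrable_lim:
  assumes c: "c > 1" and T: "T > 0"
  shows "Fi n c t integrable_on {-T..T}"
    and "(\<lambda>K. integral {-T..T} (FiK n c t K)) \<longlonglongrightarrow> integral {-T..T} (Fi n c t)"
proof -
  define D where "D K = exp (c*t) / c * (real n * (\<Sum>m. Er c (Suc m)) ^ n * ((\<Sum>m. Er c (Suc m)) - (\<Sum>k\<in>{1..K}. Er c k)))" for K
  have Dlim: "D \<longlonglongrightarrow> 0" unfolding D_def by (rule D_lim[OF c])
  have Dnn: "D K \<ge> 0" for K
    unfolding D_def using partial_le_zeta[OF c, of K] zeta_ge1[OF c] c by (intro mult_nonneg_nonneg) auto
  have bd: "norm (Fi n c t y - FiK n c t K y) \<le> D K" for y K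
    unfolding D_def by (rule Fi_diff_bound[OF c])
  have intK: "FiK n c t K integrable_on {-T..T}" for K
  proof -
    have "c > 0" using c by simp
    from FiK_has_integral[OF this T, of n t K] show ?thesis by blast
  qed
  show int: "Fi n c t integrable_on {-T..T}"
  proof -
    have "Fi n c t integrable_on cbox (-T) T"
    proof (rule integrable_uniform_limit)
      fix e :: real assume e: "e > 0"
      from Dlim e have "eventually (\<lambda>K. dist (D K) 0 < e) sequentially" by (rule tendstoD)
      then obtain K where "dist (D K) 0 < e" by (auto simp: eventually_sequentially)
      then have "D K \<le> e" using Dnn[of K] by simp
      then show "\<exists>g. (\<forall>x\<in>cbox (-T) T. norm (Fi n c t x - g x) \<le> e) \<and> g integrable_on cbox (-T) T"
        using bd intK[of K] by (intro exI[of _ "FiK n c t K"]) (auto intro: order_trans)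
    qed
    then show ?thesis by simp
  qed
  show "(\<lambda>K. integral {-T..T} (FiK n c t K)) \<longlonglongrightarrow> integral {-T..T} (Fi n c t)"
  proof (rule LIM_zero_cancel, rule Lim_null_comparison)
    show "eventually (\<lambda>K. norm (integral {-T..T} (FiK n c t K) - integral {-T..T} (Fi n c t)) \<le> D K * (2*T)) sequentially"
    proof (intro always_eventually allI)
      fix K
      have "((\<lambda>y. Fi n c t y - FiK n c t K y) has_integral (integral {-T..T} (Fi n c t) - integral {-T..T} (FiK n c t K))) (cbox (-T) T)"
        using has_integral_diff[OF integrable_integral[OF int] integrable_integral[OF intK[of K]]] by simp
      then have "norm (integral {-T..T} (Fi n c t) - integral {-T..T} (FiK n c t K)) \<le> D K * measure lborel (cbox (-T) T)"
        by (rule has_integral_bound[OF Dnn]) (use bd in auto)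
      then show "norm (integral {-T..T} (FiK n c t K) - integral {-T..T} (Fi n c t)) \<le> D K * (2*T)"
        using T by (simp add: norm_minus_commute)
    qed
    have "(\<lambda>K. D K * (2*T)) \<longlonglongrightarrow> 0 * (2*T)" by (intro tendsto_intros Dlim)
    then show "(\<lambda>K. D K * (2*T)) \<longlonglongrightarrow> 0" by simp
  qed
qed

lemma elem_le_prod:
  assumes "\<forall>k\<in>set ks. k \<ge> (1::nat)" "x \<in> set ks"
  shows "x \<le> prod_list ks"
  using assms
proof (induction ks)
  case Nil then show ?case by simp
next
  case (Cons k ks)
  have p: "prod_list ks \<ge> 1" using Cons.prems(1) by (induction ks) auto
  show ?case
  proof (cases "x = k")
    case True then show ?thesis using p by simp
  next
    case False
    then have "x \<le> prod_list ks" using Cons by auto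
    also have "\<dots> \<le> k * prod_list ks" using Cons.prems(1) by simp
    finally show ?thesis by simp
  qed
qed

lemma prod_ge1: "\<forall>k\<in>set ks. k \<ge> (1::nat) \<Longrightarrow> prod_list ks \<ge> 1"
  by (induction ks) auto

lemma grouping:
  fixes phi :: "nat \<Rightarrow> real"
  assumes L: "N \<le> L" and zero: "\<And>M. M > N \<Longrightarrow> phi M = 0"
  shows "(\<Sum>ks\<in>LK n L. phi (prod_list ks)) = (\<Sum>m=1..N. real (piltz n m) * phi m)"
proof -
  let ?S = "{ks \<in> LK n L. prod_list ks \<le> N}"
  have fS: "finite ?S" using finite_LK by simp
  have "(\<Sum>ks\<in>LK n L. phi (prod_list ks)) = (\<Sum>ks\<in>?S. phi (prod_list ks))"
    by (rule sum.mono_neutral_right) (auto simp: finite_LK intro!: zero)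
  also have "\<dots> = (\<Sum>m\<in>{1..N}. \<Sum>ks\<in>{ks. ks \<in> ?S \<and> prod_list ks = m}. phi (prod_list ks))"
    by (rule sum.group[symmetric]) (use fS prod_ge1 LK_ge1 in auto)
  also have "\<dots> = (\<Sum>m=1..N. real (piltz n m) * phi m)"
  proof (rule sum.cong[OF refl])
    fix m assume m: "m \<in> {1..N}"
    have eq: "{ks. ks \<in> ?S \<and> prod_list ks = m} = {ks :: nat list. length ks = n \<and> (\<forall>k\<in>set ks. k \<ge> 1) \<and> prod_list ks = m}"
    proof (intro set_eqI iffI)
      fix ks assume "ks \<in> {ks. ks \<in> ?S \<and> prod_list ks = m}"
      then show "ks \<in> {ks :: nat list. length ks = n \<and> (\<forall>k\<in>set ks. k \<ge> 1) \<and> prod_list ks = m}"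
        by (auto simp: LK_def)
    next
      fix ks assume ks: "ks \<in> {ks :: nat list. length ks = n \<and> (\<forall>k\<in>set ks. k \<ge> 1) \<and> prod_list ks = m}"
      then have "\<forall>x\<in>set ks. x \<le> L" using elem_le_prod[of ks] m L by fastforce
      with ks m show "ks \<in> {ks. ks \<in> ?S \<and> prod_list ks = m}" by (auto simp: LK_def)
    qed
    have "(\<Sum>ks\<in>{ks. ks \<in> ?S \<and> prod_list ks = m}. phi (prod_list ks)) = (\<Sum>ks\<in>{ks. ks \<in> ?S \<and> prod_list ks = m}. phi m)"
      by (rule sum.cong) auto
    also have "\<dots> = real (piltz n m) * phi m" unfolding eq piltz_def by simp
    finally show "(\<Sum>ks\<in>{ks. ks \<in> ?S \<and> prod_list ks = m}. phi (prod_list ks)) = real (piltz n m) * phi m" .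
  qed
  finally show ?thesis .
qed

definition W :: "nat \<Rightarrow> real \<Rightarrow> real \<Rightarrow> nat \<Rightarrow> real \<Rightarrow> complex" where
  "W n c t K T = (\<Sum>ks\<in>LK n K. -\<i> * Gc n c (t - ln (real (prod_list ks))) T) / of_real (2 * pi)"

lemma LK_mono: "L \<le> K \<Longrightarrow> LK n L \<subseteq> LK n K"
  unfolding LK_def by auto

lemma sum_LK_Er: "(\<Sum>ks\<in>LK n K. prod_list (map (Er c) ks)) = (\<Sum>k\<in>{1..K}. Er c k) ^ n"
  unfolding LK_def by (rule sum_lists_prod) simp

lemma tail_bound:
  assumes c: "c > 1" and LK: "L \<le> K" and Lt: "exp (t + 1) \<le> real L" and T: "T \<ge> 1"
  shows "norm (W n c t K T - W n c t L T) \<le>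
           2 ^ (n+1) * exp (c*t) / (2*pi) * ((\<Sum>k\<in>{1..K}. Er c k) ^ n - (\<Sum>k\<in>{1..L}. Er c k) ^ n)"
proof -
  let ?D = "LK n K - LK n L"
  let ?g = "\<lambda>ks. -\<i> * Gc n c (t - ln (real (prod_list ks))) T"
  have c0: "c > 0" using c by simp
  have sub: "LK n L \<subseteq> LK n K" by (rule LK_mono[OF LK])
  have "W n c t K T - W n c t L T = (\<Sum>ks\<in>?D. ?g ks) / of_real (2 * pi)"
    unfolding W_def using sum_diff[OF finite_LK sub, of ?g] by (simp add: diff_divide_distrib)
  also have "norm \<dots> = norm (\<Sum>ks\<in>?D. ?g ks) / (2 * pi)"
    by (simp add: norm_divide)
  also have "\<dots> \<le> (\<Sum>ks\<in>?D. 2 ^ (n+1) * exp (c*t) * prod_list (map (Er c) ks)) / (2 * pi)"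
  proof (intro divide_right_mono order_trans[OF norm_sum] sum_mono)
    fix ks assume ks: "ks \<in> ?D"
    have ge1: "\<forall>k\<in>set ks. k \<ge> 1" using ks LK_ge1 by auto
    have ns: "\<not> set ks \<subseteq> {1..L}" using ks by (auto simp: LK_def)
    then obtain x where x0: "x \<in> set ks" "x \<notin> {1..L}" by blast
    with ge1 have x: "x \<in> set ks" "x > L" by auto
    have "real L < real (prod_list ks)" using elem_le_prod[OF ge1 x(1)] x(2) by simp
    then have P: "exp (t+1) < real (prod_list ks)" using Lt by linarith
    have "ln (exp (t+1)) < ln (real (prod_list ks))"
      using P prod_ge1[OF ge1] by (subst ln_less_cancel_iff) auto
    then have "t + 1 < ln (real (prod_list ks))" by simp
    then have u: "t - ln (real (prod_list ks)) \<le> -1" by simp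
    have "norm (?g ks) = norm (Gc n c (t - ln (real (prod_list ks))) T)" by (simp add: norm_mult)
    also have "\<dots> \<le> 2 ^ (n+1) * exp (c * (t - ln (real (prod_list ks))))"
      by (rule Gc_bound[OF c0 u T])
    also have "exp (c * (t - ln (real (prod_list ks)))) = exp (c*t) * Er c (prod_list ks)"
      by (simp add: Er_def exp_add[symmetric] algebra_simps)
    also have "Er c (prod_list ks) = prod_list (map (Er c) ks)" by (rule prod_Er[OF ge1, symmetric])
    finally show "norm (?g ks) \<le> 2 ^ (n+1) * exp (c*t) * prod_list (map (Er c) ks)"
      by (simp add: mult.assoc)
  qed simp
  also have "\<dots> = 2 ^ (n+1) * exp (c*t) / (2*pi) * ((\<Sum>k\<in>{1..K}. Er c k) ^ n - (\<Sum>k\<in>{1..L}. Er c k) ^ n)"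
    unfolding sum_distrib_left[symmetric] sum_diff[OF finite_LK sub] sum_LK_Er by simp
  finally show ?thesis .
qed

theorem lemma2:
  fixes n N :: nat and c t :: real
  assumes "n \<ge> 1" and "N \<ge> 1" and "c > 1"
    and "0 < t" and "t < ln (real N + 1)"
  shows "((\<lambda>T. bromwich_trunc (F_fun n) c t T) \<longlongrightarrow>
           complex_of_real (\<Sum>m=1..N. real (piltz n m) * step_h (t - ln (real m)) * laguerre n (t - ln (real m))))
         at_top"
proof -
  note c = \<open>c > 1\<close>
  have c0: "c > 0" using c by simp
  define R where "R = (\<Sum>m=1..N. real (piltz n m) * step_h (t - ln (real m)) * laguerre n (t - ln (real m)))"
  define Zr where "Zr = (\<Sum>m. Er c (Suc m))"
  define S where "S K = (\<Sum>k\<in>{1..K}. Er c k)" for K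
  have Slim: "S \<longlonglongrightarrow> Zr" unfolding S_def Zr_def by (rule partial_lim[OF c])
  have S_le: "S K \<le> Zr" for K unfolding S_def Zr_def by (rule partial_le_zeta[OF c])
  have S_nn: "S K \<ge> 0" for K unfolding S_def by (intro sum_nonneg) (simp add: Er_nonneg)
  define B where "B L = 2 ^ (n+1) * exp (c*t) / (2*pi) * (Zr ^ n - S L ^ n)" for L
  have Wlim: "(\<lambda>K. W n c t K T) \<longlonglongrightarrow> bromwich_trunc (F_fun n) c t T" if T: "T > 0" for T
  proof -
    have "W n c t K T = integral {-T..T} (FiK n c t K) / of_real (2*pi)" for K
      unfolding W_def using integral_unique[OF FiK_has_integral[OF c0 T, of n t K]] by simp
    moreover have "bromwich_trunc (F_fun n) c t T = integral {-T..T} (Fi n c t) / of_real (2*pi)"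
      unfolding bromwich_trunc_def Fi_def by simp
    moreover have "(\<lambda>K. integral {-T..T} (FiK n c t K) / of_real (2*pi)) \<longlonglongrightarrow> integral {-T..T} (Fi n c t) / of_real (2*pi)"
      by (intro tendsto_divide tendsto_const Fi_integrable_lim(2)[OF c T]) simp
    ultimately show ?thesis by simp
  qed
  have grp: "(\<Sum>ks\<in>LK n L. complex_of_real (step_h (t - ln (real (prod_list ks))) * laguerre n (t - ln (real (prod_list ks)))))
      = complex_of_real R" if L: "N \<le> L" for L
  proof -
    have "(\<Sum>ks\<in>LK n L. (\<lambda>M. step_h (t - ln (real M)) * laguerre n (t - ln (real M))) (prod_list ks))
       = (\<Sum>m=1..N. real (piltz n m) * (\<lambda>M. step_h (t - ln (real M)) * laguerre n (t - ln (real M))) m)"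
    proof (rule grouping[OF L])
      fix M assume M: "M > N"
      have "ln (real N + 1) \<le> ln (real M)" using M by simp
      then have "t - ln (real M) < 0" using \<open>t < ln (real N + 1)\<close> by simp
      then show "step_h (t - ln (real M)) * laguerre n (t - ln (real M)) = 0" by (simp add: step_h_def)
    qed
    then show ?thesis unfolding R_def of_real_sum[symmetric] by (simp add: mult.assoc)
  qed
  have WLlim: "((\<lambda>T. W n c t L T) \<longlongrightarrow> complex_of_real R) at_top" if L: "N \<le> L" for L
  proof -
    have "((\<lambda>T. W n c t L T) \<longlongrightarrow> (\<Sum>ks\<in>LK n L. -\<i> * (2 * pi * \<i> * complex_of_real (step_h (t - ln (real (prod_list ks))) * laguerre n (t - ln (real (prod_list ks)))))) / of_real (2*pi)) at_top"
      unfolding W_def by (intro tendsto_divide tendsto_sum tendsto_mult tendsto_const Gc_lim c0) simp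
    also have "(\<Sum>ks\<in>LK n L. -\<i> * (2 * pi * \<i> * complex_of_real (step_h (t - ln (real (prod_list ks))) * laguerre n (t - ln (real (prod_list ks)))))) / of_real (2*pi)
       = (\<Sum>ks\<in>LK n L. complex_of_real (step_h (t - ln (real (prod_list ks))) * laguerre n (t - ln (real (prod_list ks)))))"
      by (simp add: sum_divide_distrib)
    also have "\<dots> = complex_of_real R" by (rule grp[OF L])
    finally show ?thesis .
  qed
  have Blim: "B \<longlonglongrightarrow> 0"
  proof -
    have "B \<longlonglongrightarrow> 2 ^ (n+1) * exp (c*t) / (2*pi) * (Zr ^ n - Zr ^ n)"
      unfolding B_def by (intro tendsto_intros Slim)
    then show ?thesis by simp
  qed
  show ?thesis unfolding R_def[symmetric]
  proof (rule tendstoI)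
    fix e :: real assume e: "e > 0"
    have "eventually (\<lambda>L. B L < e/2) sequentially"
      using tendstoD[OF Blim, of "e/2"] e by (auto elim: eventually_mono)
    moreover have "eventually (\<lambda>L. N \<le> L) sequentially" by (rule eventually_ge_at_top)
    moreover have "eventually (\<lambda>L. nat \<lceil>exp (t+1)\<rceil> \<le> L) sequentially" by (rule eventually_ge_at_top)
    ultimately have "eventually (\<lambda>L. B L < e/2 \<and> N \<le> L \<and> nat \<lceil>exp (t+1)\<rceil> \<le> L) sequentially"
      by eventually_elim auto
    then obtain L where LB: "B L < e/2" and LN: "N \<le> L" and Le: "nat \<lceil>exp (t+1)\<rceil> \<le> L"
      by (auto simp: eventually_sequentially)
    have Lt: "exp (t+1) \<le> real L"
    proof -
      have "exp (t+1) \<le> real (nat \<lceil>exp (t+1)\<rceil>)" by linarith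
      also have "\<dots> \<le> real L" by (rule of_nat_mono[OF Le])
      finally show ?thesis .
    qed
    have "eventually (\<lambda>T. dist (W n c t L T) (complex_of_real R) < e/2) at_top"
      using tendstoD[OF WLlim[OF LN], of "e/2"] e by simp
    moreover have "eventually (\<lambda>T::real. T \<ge> 1) at_top" by (rule eventually_ge_at_top)
    ultimately show "eventually (\<lambda>T. dist (bromwich_trunc (F_fun n) c t T) (complex_of_real R) < e) at_top"
    proof eventually_elim
      case (elim T)
      have T0: "T > 0" using elim by simp
      define A where "A = norm (W n c t L T - complex_of_real R)"
      have A: "A < e/2" using elim by (simp add: A_def dist_norm)
      have "norm (bromwich_trunc (F_fun n) c t T - complex_of_real R) \<le> A + B L"
      proof (rule LIMSEQ_le_const2)
        show "(\<lambda>K. norm (W n c t K T - complex_of_real R)) \<longlonglongrightarrow> norm (bromwich_trunc (F_fun n) c t T - complex_of_real R)"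
          by (intro tendsto_norm tendsto_diff tendsto_const Wlim T0)
        show "\<exists>N0. \<forall>K\<ge>N0. norm (W n c t K T - complex_of_real R) \<le> A + B L"
        proof (intro exI allI impI)
          fix K assume K: "L \<le> K"
          have "norm (W n c t K T - complex_of_real R) \<le> norm (W n c t K T - W n c t L T) + A"
            unfolding A_def by (rule order_trans[OF _ norm_triangle_ineq]) simp
          also have "norm (W n c t K T - W n c t L T) \<le> 2 ^ (n+1) * exp (c*t) / (2*pi) * (S K ^ n - S L ^ n)"
            unfolding S_def by (rule tail_bound[OF c K Lt]) (use elim in simp)
          also have "\<dots> \<le> B L"
            unfolding B_def using power_mono[OF S_le[of K] S_nn[of K], of n] by (intro mult_left_mono) auto
          finally show "norm (W n c t K T - complex_of_real R) \<le> A + B L" by simp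
        qed
      qed
      also have "\<dots> < e" using A LB by simp
      finally show ?case by (simp add: dist_norm)
    qed
  qed
qed


end
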